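(* Let $0<q<1$ and let $A_q(t)=\sum_{n=0}^{\infty}A_{n,q}\dfrac{t^n}{[n]_q!}$ be a power series, analytic at $t=0$, with $A_q(0)=A_{0,q}\neq 0$. Define the $q$-Appell polynomials $A_{n,q}(x)$ by \[ A_q(t)\,e_q(tx)=\sum_{n=0}^{\infty}A_{n,q}(x)\frac{t^n}{[n]_q!}. \] Assume that \[ t\,\frac{D_{q,t}A_q(t)}{A_q(qt)}=\sum_{n=0}^{\infty}\alpha_n\frac{t^n}{[n]_q!}. \] Then for every positive integer $n$ the polynomial $A_{n,q}(x)$ satisfies the $q$-difference equation \[ \sum_{k=0}^{n}\frac{q^{n-k}\alpha_k}{[k]_q!}D_{q,x}^{k}A_{n,q}(x)+x\,q^{n}D_{q,x}A_{n,q}(x)-[n]_qA_{n,q}(qx)=0, \] i.e. \[ \frac{\alpha_n}{[n]_q!}D_{q,x}^nA_{n,q}(x)+\frac{q\alpha_{n-1}}{[n-1]_q!}D_{q,x}^{n-1}A_{n,q}(x)+\dots+\frac{q^{n-1}\alpha_1}{[1]_q!}D_{q,x}A_{n,q}(x)+\frac{q^n\alpha_0}{[0]_q!}A_{n,q}(x)+xq^nD_{q,x}A_{n,q}(x)-[n]_qA_{n,q}(qx)=0. \]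
   Context: $[n]_q=\frac{1-q^n}{1-q}$, $[0]_q!=1$, $[n]_q!=[n]_q[n-1]_q\cdots[1]_q$. The $q$-exponential is $e_q(t)=\sum_{n=0}^\infty \frac{t^n}{[n]_q!}$. The $q$-derivative is $D_{q,x}f(x)=\frac{f(qx)-f(x)}{(q-1)x}$ (for $x\neq0$; on polynomials/power series $D_{q,x}x^n=[n]_qx^{n-1}$); $D_{q,t}$ is the same operator in the variable $t$, and $D_{q,x}^k$ denotes the $k$-fold iterate ($D_{q,x}^0$ = identity). *)

theory Defs
  imports "HOL-Analysis.Analysis"
begin

definition qint :: "real \<Rightarrow> nat \<Rightarrow> real" where
  "qint q n = (1 - q ^ n) / (1 - q)"

definition qfact :: "real \<Rightarrow> nat \<Rightarrow> real" where
  "qfact q n = (\<Prod>i = 1..n. qint q i)"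

definition qexp :: "real \<Rightarrow> real \<Rightarrow> real" where
  "qexp q t = (\<Sum>n. t ^ n / qfact q n)"

text \<open>q-derivative (f(qx) - f(x))/((q-1)x) for x \<noteq> 0; at x = 0 we use the
  ordinary derivative, which agrees with the convention D_q x^n = [n]_q x^(n-1)
  on polynomials (both give the coefficient of x).\<close>
definition qD :: "real \<Rightarrow> (real \<Rightarrow> real) \<Rightarrow> real \<Rightarrow> real" where
  "qD q f x = (if x = 0 then deriv f 0 else (f (q * x) - f x) / ((q - 1) * x))"

definition qseries :: "real \<Rightarrow> (nat \<Rightarrow> real) \<Rightarrow> real \<Rightarrow> real" where
  "qseries q a t = (\<Sum>n. a n * t ^ n / qfact q n)"

text \<open>q-Appell polynomials, defined by A_q(t) e_q(tx) = sum A_{n,q}(x) t^n/[n]_q!,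
  i.e. by comparing coefficients of t^n in the Cauchy product:
  A_{n,q}(x)/[n]_q! = sum_{k=0}^n (a_k/[k]_q!) (x^(n-k)/[n-k]_q!).\<close>
definition qAppell :: "real \<Rightarrow> (nat \<Rightarrow> real) \<Rightarrow> nat \<Rightarrow> real \<Rightarrow> real" where
  "qAppell q a n x = qfact q n * (\<Sum>k\<le>n. (a k / qfact q k) * (x ^ (n - k) / qfact q (n - k)))"

end

theory Submission
  imports Defs
begin

lemma qint_1: "q \<noteq> 1 \<Longrightarrow> qint q 1 = 1" by (simp add: qint_def)
lemma qint_0: "qint q 0 = 0" by (simp add: qint_def)
lemma qfact_0: "qfact q 0 = 1" by (simp add: qfact_def)
lemma qfact_Suc: "qfact q (Suc n) = qfact q n * qint q (Suc n)"
  by (simp add: qfact_def prod.cl_ivl_Suc)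
lemma qint_pos: "0 < q \<Longrightarrow> q < 1 \<Longrightarrow> 0 < n \<Longrightarrow> 0 < qint q n"
  unfolding qint_def by (simp add: power_less_one_iff)
lemma qfact_pos: "0 < q \<Longrightarrow> q < 1 \<Longrightarrow> 0 < qfact q n"
  unfolding qfact_def by (intro prod_pos) (auto intro: qint_pos)

lemma qint_id: assumes "q \<noteq> 1" "j \<le> n"
  shows "q^j * qint q (n-j) + q^n * qint q j = qint q n * q^j"
proof -
  have e: "q^n = q^j * q^(n-j)" using assms(2) by (simp flip: power_add)
  have g: "A*((1-B)/(1-q)) + A*B*((1-A)/(1-q)) = ((1-A*B)/(1-q))*A" for A B :: real
  proof -
    have "A*((1-B)/(1-q)) + A*B*((1-A)/(1-q)) = (A*(1-B) + A*B*(1-A))/(1-q)" by (simp add: add_divide_distrib)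
    also have "A*(1-B) + A*B*(1-A) = (1-A*B)*A" by algebra
    finally show ?thesis by simp
  qed
  show ?thesis unfolding qint_def e using g[of "q^j" "q^(n-j)"] by (simp add: mult.commute)
qed

lemma powser_zero0:
  fixes c :: "nat \<Rightarrow> real"
  assumes "s > 0" "\<And>t. t \<noteq> 0 \<Longrightarrow> \<bar>t\<bar> < s \<Longrightarrow> (\<lambda>n. c n * t^n) sums 0"
  shows "c 0 = 0"
proof -
  have "((\<lambda>_::real. 0::real) \<longlongrightarrow> c 0) (at 0)"
    by (rule powser_limit_0_strong[where a=c and s=s and f="\<lambda>_. 0", OF assms(1)]) (use assms(2) in auto)
  then show ?thesis using tendsto_const LIM_unique by blast
qed

lemma powser_zero:
  fixes c :: "nat \<Rightarrow> real"
  assumes "s > 0" "\<And>t. t \<noteq> 0 \<Longrightarrow> \<bar>t\<bar> < s \<Longrightarrow> (\<lambda>n. c n * t^n) sums 0"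
  shows "c k = 0"
  using assms(2)
proof (induction k arbitrary: c)
  case 0 then show ?case using powser_zero0[OF assms(1)] by blast
next
  case (Suc k)
  have c0: "c 0 = 0" using powser_zero0[OF assms(1)] Suc.prems by blast
  have "(\<lambda>n. c (Suc n) * t^n) sums 0" if "t \<noteq> 0" "\<bar>t\<bar> < s" for t
  proof -
    have "(\<lambda>n. c (Suc n) * t^(Suc n)) sums 0"
      using Suc.prems[OF that] c0 by (subst sums_Suc_iff) simp
    then have "(\<lambda>n. c (Suc n) * t^(Suc n) / t) sums (0 / t)" by (rule sums_divide)
    then show ?thesis using that by simp
  qed
  from Suc.IH[OF this] show ?case by simp
qed

lemma qD_poly0: "qD q (\<lambda>x. \<Sum>j<Suc 0. e j * x^j) = (\<lambda>x. 0)"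
  by (auto simp: qD_def fun_eq_iff)

lemma qD_poly:
  assumes q1: "q \<noteq> 1"
  shows "qD q (\<lambda>x. \<Sum>j<Suc (Suc m). e j * x^j) = (\<lambda>x. \<Sum>j<Suc m. e (Suc j) * qint q (Suc j) * x^j)"
proof
  fix x :: real
  show "qD q (\<lambda>x. \<Sum>j<Suc (Suc m). e j * x^j) x = (\<Sum>j<Suc m. e (Suc j) * qint q (Suc j) * x^j)"
  proof (cases "x = 0")
    case True
    have "((\<lambda>x. \<Sum>j<Suc (Suc m). e j * x^j) has_field_derivative
       (\<Sum>j<Suc (Suc m). e j * (real j * x^(j - Suc 0)))) (at x)" for x :: real
      by (intro DERIV_sum DERIV_cmult DERIV_pow)
    then have "deriv (\<lambda>x. \<Sum>j<Suc (Suc m). e j * x^j) 0 = (\<Sum>j<Suc (Suc m). e j * (real j * 0^(j - Suc 0)))"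
      by (rule DERIV_imp_deriv)
    also have "\<dots> = e 1"
      by (simp add: sum.lessThan_Suc_shift del: sum.lessThan_Suc)
    finally show ?thesis using True q1
      by (simp add: qD_def sum.lessThan_Suc_shift qint_def del: sum.lessThan_Suc)
  next
    case False
    have "qD q (\<lambda>x. \<Sum>j<Suc (Suc m). e j * x^j) x
        = (\<Sum>j<Suc (Suc m). e j * ((q*x)^j - x^j) / ((q - 1) * x))"
    proof -
      have "qD q (\<lambda>x. \<Sum>j<Suc (Suc m). e j * x^j) x
         = ((\<Sum>j<Suc (Suc m). e j * (q*x)^j) - (\<Sum>j<Suc (Suc m). e j * x^j)) / ((q - 1) * x)"
        using False by (simp add: qD_def)
      also have "(\<Sum>j<Suc (Suc m). e j * (q*x)^j) - (\<Sum>j<Suc (Suc m). e j * x^j)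
          = (\<Sum>j<Suc (Suc m). e j * ((q*x)^j - x^j))"
        by (simp only: sum_subtractf[symmetric] right_diff_distrib)
      finally show ?thesis by (simp only: sum_divide_distrib)
    qed
    also have "\<dots> = (\<Sum>j<Suc m. e (Suc j) * ((q*x)^Suc j - x^Suc j) / ((q - 1) * x))"
      by (subst sum.lessThan_Suc_shift) simp
    also have "\<dots> = (\<Sum>j<Suc m. e (Suc j) * qint q (Suc j) * x^j)"
    proof (intro sum.cong refl)
      fix j
      have "(q*x)^Suc j - x^Suc j = x * x^j * (q^Suc j - 1)" by (simp add: power_mult_distrib algebra_simps)
      then show "e (Suc j) * ((q*x)^Suc j - x^Suc j) / ((q - 1) * x) = e (Suc j) * qint q (Suc j) * x^j"
        using False q1 unfolding qint_def by (simp add: field_simps)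
    qed
    finally show ?thesis .
  qed
qed

lemma alg:
  fixes q x :: real and b c :: "nat \<Rightarrow> real"
  assumes q0: "0 < q" "q < 1" and rec: "\<And>m. (\<Sum>k\<le>m. c k * q^(m-k) * b (m-k)) = qint q m * b m"
    and n: "0 < n"
  shows "(\<Sum>k\<le>n. q^(n-k) * c k * (\<Sum>j\<le>n-k. b (n-k-j) * x^j / qfact q j))
       + x * q^n * (\<Sum>j\<le>n-1. b (n-1-j) * x^j / qfact q j)
       - qint q n * (\<Sum>j\<le>n. b (n-j) * (q*x)^j / qfact q j) = 0"
proof -
  have q1: "q \<noteq> 1" using q0 by simp
  have T1: "(\<Sum>k\<le>n. q^(n-k) * c k * (\<Sum>j\<le>n-k. b (n-k-j) * x^j / qfact q j))
      = (\<Sum>j\<le>n. x^j / qfact q j * (q^j * qint q (n-j) * b (n-j)))"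
  proof -
    have "(\<Sum>k\<le>n. q^(n-k) * c k * (\<Sum>j\<le>n-k. b (n-k-j) * x^j / qfact q j))
       = (\<Sum>k\<le>n. \<Sum>j\<in>{j. j \<in> {..n} \<and> k + j \<le> n}. q^(n-k) * c k * (b (n-k-j) * x^j / qfact q j))"
    proof (intro sum.cong refl)
      fix k assume kn: "k \<in> {..n}"
      have "{..n-k} = {j. j \<in> {..n} \<and> k + j \<le> n}" using kn by auto
      then show "q^(n-k) * c k * (\<Sum>j\<le>n-k. b (n-k-j) * x^j / qfact q j)
          = (\<Sum>j\<in>{j. j \<in> {..n} \<and> k + j \<le> n}. q^(n-k) * c k * (b (n-k-j) * x^j / qfact q j))"
        by (simp add: sum_distrib_left)
    qed
    also have "\<dots> = (\<Sum>j\<le>n. \<Sum>k\<in>{k. k \<in> {..n} \<and> k + j \<le> n}. q^(n-k) * c k * (b (n-k-j) * x^j / qfact q j))"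
      by (rule sum.swap_restrict) auto
    also have "\<dots> = (\<Sum>j\<le>n. x^j / qfact q j * (q^j * qint q (n-j) * b (n-j)))"
    proof (intro sum.cong refl)
      fix j assume j: "j \<in> {..n}"
      have s: "{k. k \<in> {..n} \<and> k + j \<le> n} = {..n-j}" using j by auto
      have "(\<Sum>k\<le>n-j. q^(n-k) * c k * (b (n-k-j) * x^j / qfact q j))
          = (\<Sum>k\<le>n-j. x^j / qfact q j * q^j * (c k * q^(n-j-k) * b (n-j-k)))"
      proof (intro sum.cong refl)
        fix k assume "k \<in> {..n-j}"
        then have "n - k = j + (n-j-k)" "n-k-j = n-j-k" using j by auto
        then show "q^(n-k) * c k * (b (n-k-j) * x^j / qfact q j) = x^j / qfact q j * q^j * (c k * q^(n-j-k) * b (n-j-k))"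
          by (simp add: power_add)
      qed
      also have "\<dots> = x^j / qfact q j * q^j * (\<Sum>k\<le>n-j. c k * q^(n-j-k) * b (n-j-k))"
        by (simp add: sum_distrib_left)
      also have "\<dots> = x^j / qfact q j * (q^j * qint q (n-j) * b (n-j))"
        using rec[of "n-j"] by simp
      finally show "(\<Sum>k\<in>{k. k \<in> {..n} \<and> k + j \<le> n}. q^(n-k) * c k * (b (n-k-j) * x^j / qfact q j))
          = x^j / qfact q j * (q^j * qint q (n-j) * b (n-j))" unfolding s .
    qed
    finally show ?thesis .
  qed
  obtain m where m: "n = Suc m" using n by (cases n) auto
  have T2: "x * q^n * (\<Sum>j\<le>n-1. b (n-1-j) * x^j / qfact q j)
      = (\<Sum>j\<le>n. x^j / qfact q j * (q^n * qint q j * b (n-j)))"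
  proof -
    have "(\<Sum>j\<le>n. x^j / qfact q j * (q^n * qint q j * b (n-j)))
        = (\<Sum>j\<le>m. x^Suc j / qfact q (Suc j) * (q^n * qint q (Suc j) * b (m-j)))"
      unfolding m by (subst sum.atMost_Suc_shift) (simp add: qint_0)
    also have "\<dots> = (\<Sum>j\<le>m. x * q^n * (b (m-j) * x^j / qfact q j))"
    proof (intro sum.cong refl)
      fix j
      have "qint q (Suc j) \<noteq> 0" using qint_pos[OF q0, of "Suc j"] by simp
      then show "x^Suc j / qfact q (Suc j) * (q^n * qint q (Suc j) * b (m-j)) = x * q^n * (b (m-j) * x^j / qfact q j)"
        by (simp add: qfact_Suc)
    qed
    finally show ?thesis by (simp add: m sum_distrib_left)
  qed
  have T3: "qint q n * (\<Sum>j\<le>n. b (n-j) * (q*x)^j / qfact q j)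
      = (\<Sum>j\<le>n. x^j / qfact q j * (qint q n * q^j * b (n-j)))"
    by (simp add: sum_distrib_left power_mult_distrib mult_ac)
  have "(\<Sum>j\<le>n. x^j / qfact q j * (q^j * qint q (n-j) * b (n-j)))
      + (\<Sum>j\<le>n. x^j / qfact q j * (q^n * qint q j * b (n-j)))
      - (\<Sum>j\<le>n. x^j / qfact q j * (qint q n * q^j * b (n-j)))
      = (\<Sum>j\<le>n. x^j / qfact q j * b (n-j) * ((q^j * qint q (n-j) + q^n * qint q j) - qint q n * q^j))"
    by (simp add: sum.distrib[symmetric] sum_subtractf[symmetric] algebra_simps)
  also have "\<dots> = 0"
    by (rule sum.neutral) (use qint_id[OF q1] in auto)
  finally show ?thesis using T1 T2 T3 by simp
qed

lemma R_step:
  assumes q0: "0 < q" "q < 1"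
  shows "qD q (\<lambda>x. \<Sum>j<Suc (Suc m). F * b (Suc m - j) / qfact q j * x^j)
       = (\<lambda>x. \<Sum>j<Suc m. F * b (m - j) / qfact q j * x^j)"
proof -
  have q1: "q \<noteq> 1" using q0 by simp
  have "qD q (\<lambda>x. \<Sum>j<Suc (Suc m). F * b (Suc m - j) / qfact q j * x^j)
      = (\<lambda>x. \<Sum>j<Suc m. F * b (Suc m - Suc j) / qfact q (Suc j) * qint q (Suc j) * x^j)"
    by (rule qD_poly[OF q1])
  also have "\<dots> = (\<lambda>x. \<Sum>j<Suc m. F * b (m - j) / qfact q j * x^j)"
  proof (intro ext sum.cong refl)
    fix x j
    have "qint q (Suc j) \<noteq> 0" using qint_pos[OF q0, of "Suc j"] by simp
    then show "F * b (Suc m - Suc j) / qfact q (Suc j) * qint q (Suc j) * x^j = F * b (m - j) / qfact q j * x^j"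
      by (simp add: qfact_Suc)
  qed
  finally show ?thesis .
qed

lemma R_iter:
  assumes q0: "0 < q" "q < 1"
  shows "k \<le> m \<Longrightarrow> (qD q ^^ k) (\<lambda>x. \<Sum>j<Suc m. F * b (m - j) / qfact q j * x^j)
       = (\<lambda>x. \<Sum>j<Suc (m-k). F * b (m - k - j) / qfact q j * x^j)"
proof (induction k)
  case 0 then show ?case by simp
next
  case (Suc k)
  then have e: "m - k = Suc (m - Suc k)" by simp
  have "(qD q ^^ Suc k) (\<lambda>x. \<Sum>j<Suc m. F * b (m - j) / qfact q j * x^j)
     = qD q (\<lambda>x. \<Sum>j<Suc (Suc (m - Suc k)). F * b (Suc (m - Suc k) - j) / qfact q j * x^j)"
    using Suc by (simp add: e)
  also have "\<dots> = (\<lambda>x. \<Sum>j<Suc (m - Suc k). F * b (m - Suc k - j) / qfact q j * x^j)"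
    by (rule R_step[OF q0])
  finally show ?case .
qed

theorem theorem2:
  fixes q :: real and a alpha :: "nat \<Rightarrow> real"
  assumes q: "0 < q" "q < 1"
    and analytic: "\<exists>r>0. \<forall>t. \<bar>t\<bar> < r \<longrightarrow> summable (\<lambda>n. a n * t ^ n / qfact q n)"
    and a0: "a 0 \<noteq> 0"
    and alpha: "\<exists>r>0. \<forall>t. 0 < \<bar>t\<bar> \<and> \<bar>t\<bar> < r \<longrightarrow>
                  (\<lambda>n. alpha n * t ^ n / qfact q n) sums
                    (t * qD q (qseries q a) t / qseries q a (q * t))"
    and n: "0 < n"
  shows "(\<Sum>k\<le>n. q ^ (n - k) * alpha k / qfact q k * ((qD q ^^ k) (qAppell q a n) x))
         + x * q ^ n * qD q (qAppell q a n) x - qint q n * qAppell q a n (q * x) = 0"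
proof -
  have q1: "q \<noteq> 1" using q by simp
  obtain r1 where r1: "r1 > 0" "\<And>t. \<bar>t\<bar> < r1 \<Longrightarrow> summable (\<lambda>n. a n * t ^ n / qfact q n)"
    using analytic by blast
  obtain r2 where r2: "r2 > 0" "\<And>t. 0 < \<bar>t\<bar> \<Longrightarrow> \<bar>t\<bar> < r2 \<Longrightarrow> (\<lambda>n. alpha n * t ^ n / qfact q n) sums
                    (t * qD q (qseries q a) t / qseries q a (q * t))"
    using alpha by blast
  define b where "b = (\<lambda>n. a n / qfact q n)"
  define c where "c = (\<lambda>n. alpha n / qfact q n)"
  define A where "A = qseries q a"
  have bt: "(\<lambda>n. b n * t^n) sums A t" if "\<bar>t\<bar> < r1" for t
  proof -
    have "(\<lambda>n. a n * t ^ n / qfact q n) sums A t"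
      using summable_sums[OF r1(2)[OF that]] unfolding A_def qseries_def .
    then show ?thesis by (simp add: b_def)
  qed
  have lim: "(A \<longlongrightarrow> a 0) (at 0)"
    using powser_limit_0[where a=b and s=r1 and f=A, OF r1(1)] bt by (simp add: b_def qfact_0)
  have "eventually (\<lambda>u. A u \<noteq> 0) (at 0)"
    by (rule tendsto_imp_eventually_ne[OF lim a0])
  then obtain d where d: "d > 0" "\<And>u. u \<noteq> 0 \<Longrightarrow> dist u 0 < d \<Longrightarrow> A u \<noteq> 0"
    unfolding eventually_at by auto
  define s where "s = min (min r1 r2) d"
  have s0: "s > 0" using r1 r2 d by (simp add: s_def)
  have key: "(\<lambda>k. ((\<Sum>i\<le>k. c i * q^(k-i) * b (k-i)) - qint q k * b k) * t^k) sums 0"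
    if t0: "t \<noteq> 0" and ts: "\<bar>t\<bar> < s" for t
  proof -
    have tr1: "\<bar>t\<bar> < r1" and tr2: "\<bar>t\<bar> < r2" and td: "\<bar>t\<bar> < d" using ts by (auto simp: s_def)
    have qt: "\<bar>q*t\<bar> < \<bar>t\<bar>" using q t0 by (simp add: abs_mult)
    have qt0: "q * t \<noteq> 0" using q t0 by simp
    have Aqt: "A (q*t) \<noteq> 0" using d(2)[OF qt0] qt td by simp
    have S1: "(\<lambda>n. c n * t^n) sums (t * qD q A t / A (q * t))"
      using r2(2)[of t] t0 tr2 by (simp add: c_def A_def)
    have "(\<lambda>n. b n * (q*t)^n - b n * t^n) sums (A (q*t) - A t)"
      by (rule sums_diff) (use bt qt tr1 in auto)
    then have "(\<lambda>n. (b n * (q*t)^n - b n * t^n) / (q - 1)) sums ((A (q*t) - A t) / (q - 1))"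
      by (rule sums_divide)
    moreover have "(A (q*t) - A t) / (q - 1) = t * qD q A t"
      using t0 q1 by (simp add: qD_def field_simps)
    moreover have "(b n * (q*t)^n - b n * t^n) / (q - 1) = qint q n * b n * t^n" for n
      using q1 unfolding qint_def by (simp add: power_mult_distrib field_simps)
    ultimately have S3: "(\<lambda>n. qint q n * b n * t^n) sums (t * qD q A t)" by simp
    define t' where "t' = (\<bar>t\<bar> + s) / 2"
    have t': "\<bar>t\<bar> < \<bar>t'\<bar>" "0 < \<bar>t'\<bar>" "\<bar>t'\<bar> < r2" using ts t0 by (auto simp: t'_def s_def)
    have "summable (\<lambda>n. c n * t'^n)"
      using r2(2)[OF t'(2,3)] by (simp add: c_def A_def sums_summable)
    then have N1: "summable (\<lambda>n. norm (c n * t^n))"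
      by (rule powser_insidea) (use t' in simp)
    have N2: "summable (\<lambda>n. norm (b n * (q*t)^n))"
      by (rule powser_insidea[OF sums_summable[OF bt[OF tr1]]]) (use qt in simp)
    have "(\<lambda>k. \<Sum>i\<le>k. c i * t^i * (b (k-i) * (q*t)^(k-i))) sums
           ((\<Sum>n. c n * t^n) * (\<Sum>n. b n * (q*t)^n))"
      by (rule Cauchy_product_sums[OF N1 N2])
    moreover have "(\<Sum>n. c n * t^n) * (\<Sum>n. b n * (q*t)^n) = t * qD q A t"
    proof -
      have e1: "(\<Sum>n. c n * t^n) = t * qD q A t / A (q*t)" using sums_unique[OF S1] by simp
      have e2: "(\<Sum>n. b n * (q*t)^n) = A (q*t)" using sums_unique[OF bt[of "q*t"]] qt tr1 by simp
      show ?thesis by (simp only: e1 e2) (simp add: Aqt)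
    qed
    moreover have "(\<Sum>i\<le>k. c i * t^i * (b (k-i) * (q*t)^(k-i))) = (\<Sum>i\<le>k. c i * q^(k-i) * b (k-i)) * t^k" for k
      unfolding sum_distrib_right
    proof (intro sum.cong refl)
      fix i assume "i \<in> {..k}"
      then have "t^k = t^i * t^(k-i)" by (simp flip: power_add)
      then show "c i * t^i * (b (k-i) * (q*t)^(k-i)) = c i * q^(k-i) * b (k-i) * t^k"
        by (simp add: power_mult_distrib)
    qed
    ultimately have S2: "(\<lambda>k. (\<Sum>i\<le>k. c i * q^(k-i) * b (k-i)) * t^k) sums (t * qD q A t)" by simp
    from sums_diff[OF S2 S3] show ?thesis by (simp add: algebra_simps)
  qed
  have rec: "(\<Sum>k\<le>m. c k * q^(m-k) * b (m-k)) = qint q m * b m" for m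
    using powser_zero[OF s0 key, of m] by simp
  define F where "F = qfact q n"
  define Q where "Q = (\<lambda>m y. \<Sum>j\<le>m. b (m-j) * y^j / qfact q j)"
  have Rform: "(\<lambda>y. \<Sum>j<Suc m. F * b (m-j) / qfact q j * y^j) = (\<lambda>y. F * Q m y)" for m
    by (simp add: Q_def lessThan_Suc_atMost sum_distrib_left mult_ac)
  have QA: "qAppell q a n = (\<lambda>y. \<Sum>j<Suc n. F * b (n-j) / qfact q j * y^j)"
  proof
    fix y
    have "qAppell q a n y = F * (\<Sum>k<Suc n. b k * (y ^ (n - k) / qfact q (n - k)))"
      by (simp add: qAppell_def F_def b_def lessThan_Suc_atMost)
    also have "(\<Sum>k<Suc n. b k * (y ^ (n - k) / qfact q (n - k)))
        = (\<Sum>i<Suc n. b (Suc n - Suc i) * (y ^ (n - (Suc n - Suc i)) / qfact q (n - (Suc n - Suc i))))"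
      by (rule sum.nat_diff_reindex[symmetric])
    also have "\<dots> = (\<Sum>i<Suc n. b (n-i) * (y ^ i / qfact q i))"
      by (intro sum.cong refl) auto
    also have "F * (\<Sum>i<Suc n. b (n-i) * (y ^ i / qfact q i)) = (\<Sum>j<Suc n. F * b (n-j) / qfact q j * y^j)"
      unfolding sum_distrib_left by (intro sum.cong refl) simp
    finally show "qAppell q a n y = (\<Sum>j<Suc n. F * b (n-j) / qfact q j * y^j)" .
  qed
  have iter: "(qD q ^^ k) (qAppell q a n) = (\<lambda>y. F * Q (n-k) y)" if "k \<le> n" for k
    using R_iter[OF q that, where F=F and b=b] unfolding QA Rform .
  have D1: "qD q (qAppell q a n) = (\<lambda>y. F * Q (n-1) y)"
    using iter[of 1] n by simp
  have QA': "qAppell q a n = (\<lambda>y. F * Q n y)" using iter[of 0] by simp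
  have S: "(\<Sum>k\<le>n. q ^ (n - k) * alpha k / qfact q k * ((qD q ^^ k) (qAppell q a n) x))
      = F * (\<Sum>k\<le>n. q^(n-k) * c k * Q (n-k) x)"
    unfolding sum_distrib_left
    by (intro sum.cong refl) (simp add: iter c_def)
  have Z: "(\<Sum>k\<le>n. q^(n-k) * c k * Q (n-k) x) + x * q^n * Q (n-1) x - qint q n * Q n (q*x) = 0"
    using alg[OF q rec n, of x] unfolding Q_def by simp
  have "(\<Sum>k\<le>n. q ^ (n - k) * alpha k / qfact q k * ((qD q ^^ k) (qAppell q a n) x))
         + x * q ^ n * qD q (qAppell q a n) x - qint q n * qAppell q a n (q * x)
      = F * ((\<Sum>k\<le>n. q^(n-k) * c k * Q (n-k) x) + x * q^n * Q (n-1) x - qint q n * Q n (q*x))"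
    unfolding S unfolding D1 unfolding QA' by (simp only: distrib_left right_diff_distrib mult_ac)
  also have "\<dots> = 0" by (simp only: Z mult_zero_right)
  finally show ?thesis .
qed

end
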